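(* Let $W$ be an $m\times m$ diagonal matrix with positive diagonal entries and $\bar W=W\otimes I_n$. If $\ker(C\bar J')=\operatorname{span}\bar I$ (equivalently, $\bar{\mathbb N}$ is well-configured), then $\bar W\bar J C'C\bar J'$ has exactly $n$ eigenvalues equal to zero (counted with algebraic multiplicity) and all its remaining eigenvalues are real and positive.
   Context: Setup: neighbor graph $\mathbb N$ is a directed graph on $\{1,\dots,m\}$ with $d$ arcs, enumerated $e_1,\dots,e_d$; each arc $e_k=(j,i)$ carries a real matrix $C_{e_k}=C_{ji}$ with $n$ columns. The incidence matrix $J\in\mathbb R^{m\times d}$ has in column $k$ a $+1$ in row $i$ and a $-1$ in row $j$ when $e_k=(j,i)$, zeros elsewhere. $C=\operatorname{blockdiag}(C_{e_1},\dots,C_{e_d})$, $\bar J=J\otimes I_n$, $\bar I=\mathbf 1_m\otimes I_n$, and $\operatorname{span}\bar I$ is the column space of $\bar I$; $'$ denotes transpose. $\bar{\mathbb N}$ is well-configured (for all $x_1,\dots,x_m\in\mathbb R^n$, $C_{ji}x_i=C_{ji}x_j$ for every arc $(j,i)$ implies $x_1=\cdots=x_m$) iff $\ker(C\bar J')=\operatorname{span}\bar I$. *)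

theory Defs
  imports "Jordan_Normal_Form.Matrix_Kernel" "Jordan_Normal_Form.Char_Poly"
begin

definition kron :: "'a :: times mat \<Rightarrow> 'a mat \<Rightarrow> 'a mat" where
  "kron A B = mat (dim_row A * dim_row B) (dim_col A * dim_col B)
     (\<lambda>(i,j). A $$ (i div dim_row B, j div dim_col B) * B $$ (i mod dim_row B, j mod dim_col B))"

fun blockdiag :: "'a :: zero mat list \<Rightarrow> 'a mat" where
  "blockdiag [] = 0\<^sub>m 0 0"
| "blockdiag (A # As) =
     (let B = blockdiag As in
        four_block_mat A (0\<^sub>m (dim_row A) (dim_col B)) (0\<^sub>m (dim_row B) (dim_col A)) B)"

(* incidence matrix J (m x d) of arc list E; arc (j,i) = (tail, head): +1 in row i, -1 in row j.
   Vertices are 0..m-1 (the paper's 1..m shifted). *)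
definition incidence :: "nat \<Rightarrow> (nat \<times> nat) list \<Rightarrow> real mat" where
  "incidence m E = mat m (length E)
     (\<lambda>(r,k). if r = snd (E ! k) then 1 else if r = fst (E ! k) then -1 else 0)"

definition col_space :: "'a :: comm_ring_1 mat \<Rightarrow> 'a vec set" where
  "col_space A = {A *\<^sub>v x | x. x \<in> carrier_vec (dim_col A)}"

end

theory Submission
  imports Defs "Jordan_Normal_Form.Jordan_Normal_Form_Uniqueness" "Jordan_Normal_Form.Jordan_Normal_Form_Existence"
begin


definition gv :: "nat \<Rightarrow> (nat \<Rightarrow> nat \<Rightarrow> real) \<Rightarrow> complex vec \<Rightarrow> nat \<Rightarrow> complex" where
  "gv K g v k = (\<Sum>s<K. of_real (g k s) * v$s)"
definition lv :: "nat \<Rightarrow> nat \<Rightarrow> (nat \<Rightarrow> nat \<Rightarrow> real) \<Rightarrow> complex vec \<Rightarrow> nat \<Rightarrow> complex" where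
  "lv K R g v r = (\<Sum>k<R. of_real (g k r) * gv K g v k)"

lemma mv_formula:
  assumes Mc: "Mc \<in> carrier_mat K K"
    and ent: "\<forall>r<K. \<forall>s<K. Mc $$ (r,s) = of_real (w r * (\<Sum>k<R. g k r * g k s))"
    and v: "v \<in> carrier_vec K" and r: "r < K"
  shows "(Mc *\<^sub>v v) $ r = of_real (w r) * lv K R g v r"
proof -
  have "(Mc *\<^sub>v v) $ r = (\<Sum>s<K. Mc $$ (r,s) * v $ s)"
    using Mc v r by (auto simp: mult_mat_vec_def scalar_prod_def lessThan_atLeast0 intro!: sum.cong)
  also have "\<dots> = (\<Sum>s<K. of_real (w r) * (\<Sum>k<R. of_real (g k r) * (of_real (g k s) * v $ s)))"
  proof (rule sum.cong[OF refl])
    fix s assume s: "s \<in> {..<K}"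
    have "Mc $$ (r,s) * v $ s = of_real (w r) * (\<Sum>k<R. of_real (g k r * g k s)) * v $ s"
      using ent r s by simp
    also have "\<dots> = of_real (w r) * (\<Sum>k<R. of_real (g k r) * (of_real (g k s) * v $ s))"
      by (simp add: sum_distrib_right mult.assoc)
    finally show "Mc $$ (r,s) * v $ s = \<dots>" .
  qed
  also have "\<dots> = of_real (w r) * (\<Sum>s<K. \<Sum>k<R. of_real (g k r) * (of_real (g k s) * v $ s))"
    by (simp add: sum_distrib_left)
  also have "\<dots> = of_real (w r) * (\<Sum>k<R. \<Sum>s<K. of_real (g k r) * (of_real (g k s) * v $ s))"
    by (rule arg_cong[where f="\<lambda>x. _ * x"], rule sum.swap)
  also have "\<dots> = of_real (w r) * lv K R g v r"
    unfolding lv_def gv_def by (simp add: sum_distrib_left)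
  finally show ?thesis .
qed

lemma bilin:
  "(\<Sum>r<K. a $ r * lv K R g b r) = (\<Sum>k<R. gv K g a k * gv K g b k)"
proof -
  have "(\<Sum>r<K. a $ r * lv K R g b r) = (\<Sum>r<K. \<Sum>k<R. of_real (g k r) * a $ r * gv K g b k)"
    unfolding lv_def by (simp add: sum_distrib_left mult_ac)
  also have "\<dots> = (\<Sum>k<R. \<Sum>r<K. of_real (g k r) * a $ r * gv K g b k)" by (rule sum.swap)
  also have "\<dots> = (\<Sum>k<R. gv K g a k * gv K g b k)"
    unfolding gv_def by (simp add: sum_distrib_right)
  finally show ?thesis .
qed

definition cv :: "complex vec \<Rightarrow> complex vec" where "cv v = vec (dim_vec v) (\<lambda>i. cnj (v$i))"

lemma gv_cnj: "v \<in> carrier_vec K \<Longrightarrow> gv K g (cv v) k = cnj (gv K g v k)"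
  unfolding gv_def cv_def by (auto simp: intro!: sum.cong)

lemma lv_cnj: "v \<in> carrier_vec K \<Longrightarrow> lv K R g (cv v) r = cnj (lv K R g v r)"
  unfolding lv_def by (auto simp: gv_cnj intro!: sum.cong)

lemma quad: "v \<in> carrier_vec K \<Longrightarrow>
  (\<Sum>r<K. cnj (v $ r) * lv K R g v r) = of_real (\<Sum>k<R. (cmod (gv K g v k))^2)"
proof -
  assume v: "v \<in> carrier_vec K"
  have "(\<Sum>r<K. cnj (v $ r) * lv K R g v r) = (\<Sum>r<K. cv v $ r * lv K R g v r)"
    using v by (auto simp: cv_def intro!: sum.cong)
  also have "\<dots> = (\<Sum>k<R. cnj (gv K g v k) * gv K g v k)"
    unfolding bilin using v by (simp add: gv_cnj)
  also have "\<dots> = of_real (\<Sum>k<R. (cmod (gv K g v k))^2)"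
  proof -
    have e: "\<And>z. cnj z * z = of_real ((cmod z)^2)" by (metis complex_norm_square mult.commute)
    show ?thesis by (simp only: e of_real_sum)
  qed
  finally show ?thesis .
qed

locale core =
  fixes K R :: nat and g :: "nat \<Rightarrow> nat \<Rightarrow> real" and w :: "nat \<Rightarrow> real" and Mc :: "complex mat"
  assumes Mc: "Mc \<in> carrier_mat K K"
    and ent: "\<forall>r<K. \<forall>s<K. Mc $$ (r,s) = of_real (w r * (\<Sum>k<R. g k r * g k s))"
    and wpos: "\<forall>r<K. w r > 0"
begin

lemma mv: "v \<in> carrier_vec K \<Longrightarrow> r < K \<Longrightarrow> (Mc *\<^sub>v v) $ r = of_real (w r) * lv K R g v r"
  using mv_formula[OF Mc ent] by blast

lemma gv_zero_iff: assumes v: "v \<in> carrier_vec K"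
  shows "(\<forall>k<R. gv K g v k = 0) \<longleftrightarrow> (\<forall>r<K. lv K R g v r = 0)"
proof
  assume "\<forall>k<R. gv K g v k = 0" thus "\<forall>r<K. lv K R g v r = 0" unfolding lv_def by simp
next
  assume "\<forall>r<K. lv K R g v r = 0"
  hence "(\<Sum>r<K. cnj (v $ r) * lv K R g v r) = 0" by simp
  hence "(\<Sum>k<R. (cmod (gv K g v k))^2) = 0" unfolding quad[OF v] using of_real_eq_0_iff by blast
  hence "\<forall>k\<in>{..<R}. (cmod (gv K g v k))^2 = 0" by (subst (asm) sum_nonneg_eq_0_iff, auto)
  thus "\<forall>k<R. gv K g v k = 0" by auto
qed

lemma ker_iff: assumes v: "v \<in> carrier_vec K"
  shows "Mc *\<^sub>v v = 0\<^sub>v K \<longleftrightarrow> (\<forall>k<R. gv K g v k = 0)"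
proof -
  have "Mc *\<^sub>v v = 0\<^sub>v K \<longleftrightarrow> (\<forall>r<K. (Mc *\<^sub>v v) $ r = 0)"
    using Mc by (auto simp: vec_eq_iff)
  also have "\<dots> \<longleftrightarrow> (\<forall>r<K. lv K R g v r = 0)"
    using mv[OF v] wpos by (auto) (metis less_irrefl of_real_eq_0_iff)
  finally show ?thesis using gv_zero_iff[OF v] by simp
qed

lemma sq_ker: assumes v: "v \<in> carrier_vec K" and z: "Mc *\<^sub>v (Mc *\<^sub>v v) = 0\<^sub>v K"
  shows "Mc *\<^sub>v v = 0\<^sub>v K"
proof -
  define u where "u = Mc *\<^sub>v v"
  have u: "u \<in> carrier_vec K" unfolding u_def using Mc v by auto
  have gu: "\<forall>k<R. gv K g u k = 0" using ker_iff[OF u] z unfolding u_def by simp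
  have cvv: "cv v \<in> carrier_vec K" using v unfolding cv_def by auto
  have "(\<Sum>r<K. u $ r * lv K R g (cv v) r) = 0" unfolding bilin using gu by simp
  moreover have "u $ r * lv K R g (cv v) r = of_real (w r * (cmod (lv K R g v r))^2)" if r: "r < K" for r
  proof -
    have "u $ r * lv K R g (cv v) r = of_real (w r) * (lv K R g v r * cnj (lv K R g v r))"
      unfolding u_def mv[OF v r] lv_cnj[OF v] by simp
    also have "\<dots> = of_real (w r * (cmod (lv K R g v r))^2)"
      by (simp only: complex_norm_square[symmetric] of_real_mult)
    finally show ?thesis .
  qed
  ultimately have "(\<Sum>r<K. of_real (w r * (cmod (lv K R g v r))^2) :: complex) = 0"
    by simp
  hence "(\<Sum>r<K. w r * (cmod (lv K R g v r))^2) = 0"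
    by (simp only: of_real_sum[symmetric] of_real_eq_0_iff)
  hence "\<forall>r\<in>{..<K}. w r * (cmod (lv K R g v r))^2 = 0"
    using wpos by (subst (asm) sum_nonneg_eq_0_iff, auto intro!: mult_nonneg_nonneg simp: less_imp_le)
  hence "\<forall>r<K. lv K R g v r = 0" using wpos by force
  hence "\<forall>r<K. (Mc *\<^sub>v v) $ r = 0" using mv[OF v] by simp
  thus ?thesis using Mc by (auto simp: vec_eq_iff)
qed

lemma eig: assumes "eigenvalue Mc ev"
  shows "ev = 0 \<or> (Im ev = 0 \<and> Re ev > 0)"
proof -
  from assms obtain v where v: "v \<in> carrier_vec K" and v0: "v \<noteq> 0\<^sub>v K" and ev: "Mc *\<^sub>v v = ev \<cdot>\<^sub>v v"
    unfolding eigenvalue_def eigenvector_def using Mc by auto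
  define Q where "Q = (\<Sum>k<R. (cmod (gv K g v k))^2)"
  define P where "P = (\<Sum>r<K. w r * (cmod (lv K R g v r))^2)"
  have Q0: "Q \<ge> 0" unfolding Q_def by (auto intro: sum_nonneg)
  have P0: "P \<ge> 0" unfolding P_def using wpos by (auto intro!: sum_nonneg mult_nonneg_nonneg simp: less_imp_le)
  have evr: "of_real (w r) * lv K R g v r = ev * v $ r" if r: "r < K" for r
    using mv[OF v r] ev v r by (metis carrier_vecD index_smult_vec(1))
  have "of_real P = (\<Sum>r<K. cnj (lv K R g v r) * (of_real (w r) * lv K R g v r))"
    unfolding P_def of_real_sum
    by (rule sum.cong[OF refl], simp only: complex_norm_square of_real_mult, simp add: mult_ac)
  also have "\<dots> = (\<Sum>r<K. cnj (lv K R g v r) * (ev * v $ r))"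
    using evr by simp
  also have "\<dots> = ev * cnj (\<Sum>r<K. cnj (v $ r) * lv K R g v r)"
    by (simp add: sum_distrib_left mult_ac)
  also have "\<dots> = ev * of_real Q" unfolding quad[OF v] Q_def by simp
  finally have PQ: "of_real P = ev * of_real Q" .
  show ?thesis
  proof (cases "Q = 0")
    case True
    hence "\<forall>k\<in>{..<R}. (cmod (gv K g v k))^2 = 0" unfolding Q_def by (subst (asm) sum_nonneg_eq_0_iff, auto)
    hence "\<forall>k<R. gv K g v k = 0" by auto
    hence "\<forall>r<K. lv K R g v r = 0" unfolding lv_def by simp
    hence z: "\<forall>r<K. ev * v $ r = 0" using evr by (metis mult_zero_right)
    from v0 v obtain r where "r < K" "v $ r \<noteq> 0" by (auto simp: vec_eq_iff)
    with z have "ev = 0" by auto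
    thus ?thesis by simp
  next
    case False
    with Q0 have Qp: "Q > 0" by auto
    hence "ev = of_real (P / Q)" using PQ by (simp add: field_simps)
    thus ?thesis using P0 Qp by (cases "P = 0", auto)
  qed
qed
end

definition Qm :: "nat \<Rightarrow> nat \<Rightarrow> complex mat" where
  "Qm K n = mat K K (\<lambda>(i,j). (if i < K-n \<and> j = i then 1 else 0) - (if i < K-n \<and> j = K-n + i mod n then 1 else 0))"

lemma Qm_dim: assumes "n \<le> K" shows "kernel.dim K (Qm K n) = n"
proof -
  let ?Q = "Qm K n"
  have Q: "?Q \<in> carrier_mat K K" unfolding Qm_def by auto
  define f where "f i = (if i < K - n then i else K)" for i
  have "pivot_fun ?Q f K"
  proof (rule pivot_funI)
    show "dim_row ?Q = K" unfolding Qm_def by simp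
  qed (auto simp: Qm_def f_def split: if_splits)
  hence ref: "row_echelon_form ?Q" unfolding row_echelon_form_def using Q by auto
  have rows: "{i. i < K \<and> row ?Q i \<noteq> 0\<^sub>v K} = {..<K-n}"
  proof -
    have "(i < K \<and> row ?Q i \<noteq> 0\<^sub>v K) \<longleftrightarrow> i < K - n" for i
    proof
      assume "i < K \<and> row ?Q i \<noteq> 0\<^sub>v K"
      thus "i < K - n" unfolding Qm_def by (auto simp: vec_eq_iff split: if_splits)
    next
      assume i: "i < K - n"
      have "row ?Q i $ i = 1" using i unfolding Qm_def by auto
      thus "i < K \<and> row ?Q i \<noteq> 0\<^sub>v K" using i by auto
    qed
    thus ?thesis by auto
  qed
  show ?thesis using find_base_vectors(6)[OF ref Q] unfolding rows using assms by simp
qed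

lemma kdim_cong: "mat_kernel A = mat_kernel B \<Longrightarrow> kernel.dim nc A = kernel.dim nc B"
  by simp

lemma Qm_mv: fixes v :: "complex vec" assumes v: "v \<in> carrier_vec K" and i: "i < K" and n: "n > 0" "n \<le> K"
  shows "(Qm K n *\<^sub>v v) $ i = (if i < K - n then v $ i - v $ (K - n + i mod n) else 0)"
proof -
  have lt: "K - n + i mod n < K" using mod_less_divisor[OF n(1), of i] n(2) by linarith
  have "(Qm K n *\<^sub>v v) $ i = (\<Sum>j<K. ((if i < K-n \<and> j = i then 1 else 0) - (if i < K-n \<and> j = K-n + i mod n then 1 else 0)) * v $ j)"
    using v i by (auto simp: Qm_def scalar_prod_def lessThan_atLeast0 intro!: sum.cong)
  also have "\<dots> = (\<Sum>j<K. (if i < K-n \<and> j = i then v $ j else 0)) - (\<Sum>j<K. (if i < K-n \<and> j = K-n + i mod n then v $ j else 0))"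
    by (subst sum_subtractf[symmetric], rule sum.cong, auto)
  also have "\<dots> = (if i < K - n then v $ i - v $ (K - n + i mod n) else 0)"
    using i lt by (cases "i < K - n", simp_all)
  finally show ?thesis .
qed

lemma Qm_ker: assumes n: "n > 0" and K: "K = m * n" and m: "m \<ge> 1"
  shows "mat_kernel (Qm K n) = {v. v \<in> carrier_vec K \<and> (\<forall>r<K. v $ r = v $ (r mod n))}"
proof -
  have nK: "n \<le> K" using K m by simp
  have Kn: "K - n = (m - 1) * n" using K by (simp add: diff_mult_distrib)
  have modK: "(K - n + i mod n) mod n = i mod n" for i by (simp only: Kn mod_mult_self3 mod_mod_trivial)
  have ltK: "K - n + i mod n < K" for i
  proof -
    have "i mod n < n" using n by simp
    thus ?thesis using nK by linarith
  qed
  have top: "K - n + r mod n = r" if "r < K" "\<not> r < K - n" for r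
  proof -
    define t where "t = r - (K - n)"
    have t: "r = (K - n) + t" using that unfolding t_def by simp
    have "t < n" using t that by linarith
    hence "r mod n = t" unfolding t Kn by (simp only: mod_mult_self3 mod_less)
    thus ?thesis using t by simp
  qed
  have Q: "Qm K n \<in> carrier_mat K K" unfolding Qm_def by auto
  show ?thesis
  proof (rule equalityI; rule subsetI)
    fix v :: "complex vec" assume "v \<in> mat_kernel (Qm K n)"
    hence v: "v \<in> carrier_vec K" and z: "Qm K n *\<^sub>v v = 0\<^sub>v K" using mat_kernelD[OF Q] by auto
    have h: "v $ i = v $ (K - n + i mod n)" if "i < K - n" for i
    proof -
      have "(Qm K n *\<^sub>v v) $ i = 0" using z that by simp
      thus ?thesis using Qm_mv[OF v _ n nK, of i] that by simp
    qed
    have h2: "v $ i = v $ (K - n + i mod n)" if "i < K" for i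
    proof (cases "i < K - n")
      case True thus ?thesis by (rule h)
    next
      case False hence "K - n + i mod n = i" using top that by blast
      thus ?thesis by simp
    qed
    have "v $ r = v $ (r mod n)" if r: "r < K" for r
    proof -
      have rK: "r mod n < K" using mod_less_divisor[OF n, of r] nK by linarith
      have b: "v $ (r mod n) = v $ (K - n + r mod n)" using h2[OF rK] by (simp only: mod_mod_trivial)
      show ?thesis using h2[OF r] b by simp
    qed
    thus "v \<in> {v. v \<in> carrier_vec K \<and> (\<forall>r<K. v $ r = v $ (r mod n))}" using v by auto
  next
    fix v :: "complex vec" assume "v \<in> {v. v \<in> carrier_vec K \<and> (\<forall>r<K. v $ r = v $ (r mod n))}"
    hence v: "v \<in> carrier_vec K" and p: "\<forall>r<K. v $ r = v $ (r mod n)" by auto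
    have "(Qm K n *\<^sub>v v) $ i = 0" if i: "i < K" for i
    proof -
      have "v $ (K - n + i mod n) = v $ ((K - n + i mod n) mod n)" using p ltK[of i] by blast
      hence a: "v $ (K - n + i mod n) = v $ (i mod n)" by (simp only: modK)
      have b: "v $ i = v $ (i mod n)" using p i by blast
      show ?thesis unfolding Qm_mv[OF v i n nK] by (simp only: a b diff_self if_cancel)
    qed
    hence "Qm K n *\<^sub>v v = 0\<^sub>v K" using Q by (auto simp: vec_eq_iff)
    thus "v \<in> mat_kernel (Qm K n)" using v Q by (auto intro: mat_kernelI)
  qed
qed



lemma bd_dim: "(\<forall>A\<in>set As. dim_col A = n) \<Longrightarrow> dim_col (blockdiag As) = length As * n"
  by (induction As) (auto simp: Let_def)

lemma kron_dims[simp]: "dim_row (kron A B) = dim_row A * dim_row B" "dim_col (kron A B) = dim_col A * dim_col B"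
  by (simp_all add: kron_def)

lemma kron_index: "i < dim_row A * dim_row B \<Longrightarrow> j < dim_col A * dim_col B \<Longrightarrow>
   kron A B $$ (i,j) = A $$ (i div dim_row B, j div dim_col B) * B $$ (i mod dim_row B, j mod dim_col B)"
  by (simp add: kron_def)

lemma kronW: assumes W: "W \<in> carrier_mat m m" and Wd: "diagonal_mat W" and r: "r < m * n" and t: "t < m * n"
  shows "kron W (1\<^sub>m n) $$ (r,t) = (if r = t then W $$ (r div n, r div n) else (0::'a::semiring_1))"
proof -
  have n: "n > 0" using r by (cases n, auto)
  have rd: "r div n < m" "t div n < m" using r t by (simp_all add: less_mult_imp_div_less)
  have rm: "r mod n < n" "t mod n < n" using n by auto
  have e: "kron W (1\<^sub>m n) $$ (r,t) = W $$ (r div n, t div n) * (if r mod n = t mod n then 1 else 0)"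
    using W r t rm by (simp add: kron_index)
  show ?thesis
  proof (cases "r = t")
    case True thus ?thesis using e by simp
  next
    case False
    hence "r div n \<noteq> t div n \<or> r mod n \<noteq> t mod n" by (metis div_mult_mod_eq)
    thus ?thesis using e False Wd W rd unfolding diagonal_mat_def by auto
  qed
qed

lemma Ib_mv: assumes r: "r < m * n" and x: "x \<in> carrier_vec n"
  shows "(kron (mat m 1 (\<lambda>_. 1)) (1\<^sub>m n) *\<^sub>v x) $ r = (x $ (r mod n) :: 'a :: comm_ring_1)"
proof -
  have n: "n > 0" using r by (cases n, auto)
  have rd: "r div n < m" using r by (simp add: less_mult_imp_div_less)
  have "(kron (mat m 1 (\<lambda>_. 1)) (1\<^sub>m n) *\<^sub>v x) $ r = (\<Sum>c\<in>{0..<n}. (if r mod n = c then 1 else 0) * x $ c)"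
    using r x n rd by (auto simp: scalar_prod_def kron_index intro!: sum.cong)
  also have "\<dots> = (\<Sum>c\<in>{0..<n}. if r mod n = c then x $ c else 0)"
    by (rule sum.cong, auto)
  also have "\<dots> = x $ (r mod n)" using n by simp
  finally show ?thesis .
qed

lemma Ib_dc: "dim_col (kron (mat m 1 (\<lambda>_. 1)) (1\<^sub>m n :: 'a :: comm_ring_1 mat)) = n" by simp
lemma Ib_obt: "y \<in> col_space (kron (mat m 1 (\<lambda>_. 1)) (1\<^sub>m n :: 'a :: comm_ring_1 mat)) \<Longrightarrow> \<exists>x \<in> carrier_vec n. y = kron (mat m 1 (\<lambda>_. 1)) (1\<^sub>m n) *\<^sub>v x"
  unfolding col_space_def Ib_dc by blast
lemma Ib_car: "kron (mat m 1 (\<lambda>_. 1)) (1\<^sub>m n :: 'a :: comm_ring_1 mat) *\<^sub>v x \<in> carrier_vec (m*n)"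
  by (rule carrier_vecI) simp

lemma colsp: assumes m: "m \<ge> 1"
  shows "col_space (kron (mat m 1 (\<lambda>_. 1)) (1\<^sub>m n)) = {y \<in> carrier_vec (m*n). \<forall>r<m*n. y $ r = (y $ (r mod n) :: 'a :: comm_ring_1)}"
proof (rule equalityI; rule subsetI)
  fix y :: "'a vec" assume "y \<in> col_space (kron (mat m 1 (\<lambda>_. 1)) (1\<^sub>m n))"
  from Ib_obt[OF this] obtain x where x: "x \<in> carrier_vec n" and y: "y = kron (mat m 1 (\<lambda>_. 1)) (1\<^sub>m n) *\<^sub>v x"
    by blast
  have yc: "y \<in> carrier_vec (m*n)" unfolding y by (rule Ib_car)
  have p: "\<forall>r<m*n. y $ r = y $ (r mod n)"
  proof (intro allI impI)
    fix r assume r: "r < m * n"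
    have n: "n > 0" using r by (cases n, auto)
    have "n \<le> m * n" using m by simp
    hence rn: "r mod n < m * n" using mod_less_divisor[OF n, of r] by linarith
    have e1: "y $ r = x $ (r mod n)" unfolding y by (rule Ib_mv[OF r x])
    have e2: "y $ (r mod n) = x $ (r mod n mod n)" unfolding y by (rule Ib_mv[OF rn x])
    show "y $ r = y $ (r mod n)" unfolding e1 e2 by simp
  qed
  from yc p show "y \<in> {y \<in> carrier_vec (m*n). \<forall>r<m*n. y $ r = y $ (r mod n)}" by blast
next
  fix y :: "'a vec" assume "y \<in> {y \<in> carrier_vec (m*n). \<forall>r<m*n. y $ r = y $ (r mod n)}"
  hence yc: "y \<in> carrier_vec (m*n)" and p: "\<forall>r<m*n. y $ r = y $ (r mod n)" by blast+
  define x where "x = vec n (\<lambda>i. y $ i)"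
  have x: "x \<in> carrier_vec n" unfolding x_def by simp
  have "kron (mat m 1 (\<lambda>_. 1)) (1\<^sub>m n) *\<^sub>v x = y"
  proof (rule eq_vecI)
    have "dim_vec (kron (mat m 1 (\<lambda>_. 1)) (1\<^sub>m n :: 'a mat) *\<^sub>v x) = m * n"
      using Ib_car[of m n x] by (rule carrier_vecD)
    thus "dim_vec (kron (mat m 1 (\<lambda>_. 1)) (1\<^sub>m n) *\<^sub>v x) = dim_vec y" using yc by (simp only: carrier_vecD)
    fix r assume "r < dim_vec y"
    hence r: "r < m * n" using yc by (simp only: carrier_vecD)
    have n: "n > 0" using r by (cases n, auto)
    have "y $ r = y $ (r mod n)" using p r by blast
    moreover have "x $ (r mod n) = y $ (r mod n)" unfolding x_def using n by simp
    ultimately show "(kron (mat m 1 (\<lambda>_. 1)) (1\<^sub>m n) *\<^sub>v x) $ r = y $ r"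
      unfolding Ib_mv[OF r x] by simp
  qed
  with x show "y \<in> col_space (kron (mat m 1 (\<lambda>_. 1)) (1\<^sub>m n))" unfolding col_space_def Ib_dc by blast
qed



lemma pow_ker:
  fixes A :: "'a :: field mat"
  assumes A: "A \<in> carrier_mat K K"
    and sq: "\<forall>v\<in>carrier_vec K. A *\<^sub>v (A *\<^sub>v v) = 0\<^sub>v K \<longrightarrow> A *\<^sub>v v = 0\<^sub>v K"
  shows "\<forall>v\<in>carrier_vec K. ((A ^\<^sub>m Suc k) *\<^sub>v v = 0\<^sub>v K) = (A *\<^sub>v v = 0\<^sub>v K)"
proof (induction k)
  case 0
  have "A ^\<^sub>m Suc 0 = A" using A by simp
  thus ?case by simp
next
  case (Suc k)
  show ?case
  proof
    fix v :: "'a vec" assume v: "v \<in> carrier_vec K"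
    have Av: "A *\<^sub>v v \<in> carrier_vec K" using A v by simp
    have P: "A ^\<^sub>m Suc k \<in> carrier_mat K K" by (rule pow_carrier_mat[OF A])
    have "(A ^\<^sub>m Suc (Suc k)) *\<^sub>v v = (A ^\<^sub>m Suc k) *\<^sub>v (A *\<^sub>v v)"
      using assoc_mult_mat_vec[OF P A v] by simp
    hence "((A ^\<^sub>m Suc (Suc k)) *\<^sub>v v = 0\<^sub>v K) = (A *\<^sub>v (A *\<^sub>v v) = 0\<^sub>v K)"
      using Suc.IH Av by simp
    also have "\<dots> = (A *\<^sub>v v = 0\<^sub>v K)"
    proof
      assume "A *\<^sub>v (A *\<^sub>v v) = 0\<^sub>v K" thus "A *\<^sub>v v = 0\<^sub>v K" using sq v by blast
    next
      assume "A *\<^sub>v v = 0\<^sub>v K" thus "A *\<^sub>v (A *\<^sub>v v) = 0\<^sub>v K" using A by (auto intro!: eq_vecI simp: scalar_prod_def)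
    qed
    finally show "((A ^\<^sub>m Suc (Suc k)) *\<^sub>v v = 0\<^sub>v K) = (A *\<^sub>v v = 0\<^sub>v K)" .
  qed
qed

lemma pow_ker_set:
  fixes A :: "'a :: field mat"
  assumes A: "A \<in> carrier_mat K K"
    and sq: "\<forall>v\<in>carrier_vec K. A *\<^sub>v (A *\<^sub>v v) = 0\<^sub>v K \<longrightarrow> A *\<^sub>v v = 0\<^sub>v K"
  shows "mat_kernel (A ^\<^sub>m Suc k) = mat_kernel A"
proof -
  have P: "A ^\<^sub>m Suc k \<in> carrier_mat K K" by (rule pow_carrier_mat[OF A])
  show ?thesis unfolding mat_kernel[OF P] mat_kernel[OF A] using pow_ker[OF A sq, of k] by blast
qed

lemma char_matrix_0: "A \<in> carrier_mat K K \<Longrightarrow> char_matrix A 0 = A"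
  unfolding char_matrix_def by (rule eq_matI, auto)

lemma order_from_kernel:
  fixes A :: "complex mat"
  assumes A: "A \<in> carrier_mat K K"
    and sq: "\<forall>v\<in>carrier_vec K. A *\<^sub>v (A *\<^sub>v v) = 0\<^sub>v K \<longrightarrow> A *\<^sub>v v = 0\<^sub>v K"
    and kd: "kernel.dim K A = n"
  shows "order 0 (char_poly A) = n"
proof -
  from char_poly_factorized[OF A] obtain as where "char_poly A = (\<Prod>a\<leftarrow>as. [:- a, 1:])" by auto
  from jordan_nf_exists[OF A this] obtain n_as where jnf: "jordan_nf A n_as" ..
  define S where "S = sum_list (map fst n_as)"
  have le: "x \<le> S" if "x \<in> set (map fst [(n, e)\<leftarrow>n_as . e = 0])" for x
  proof -
    have "x \<in> set (map fst n_as)" using that by auto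
    thus ?thesis unfolding S_def using member_le_sum_list[of x "map fst n_as"] by auto
  qed
  have "map (min (Suc S)) (map fst [(n, e)\<leftarrow>n_as . e = 0]) = map fst [(n, e)\<leftarrow>n_as . e = 0]"
    by (rule map_idI, insert le, force)
  hence "dim_gen_eigenspace A 0 (Suc S) = sum_list (map fst [(n, e)\<leftarrow>n_as . e = 0])"
    unfolding dim_gen_eigenspace[OF jnf] by (metis (no_types, lifting) map_eq_conv)
  also have "[(n, e)\<leftarrow>n_as . e = 0] = filter (\<lambda>na. snd na = 0) n_as"
    by (rule filter_cong, auto)
  also have "sum_list (map fst \<dots>) = order 0 (char_poly A)"
    unfolding jordan_nf_order[OF jnf] ..
  finally have o: "order 0 (char_poly A) = dim_gen_eigenspace A 0 (Suc S)" ..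
  have "dim_gen_eigenspace A 0 (Suc S) = kernel_dim (A ^\<^sub>m Suc S)"
    unfolding dim_gen_eigenspace_def char_matrix_0[OF A] ..
  also have "\<dots> = kernel.dim K (A ^\<^sub>m Suc S)" unfolding kernel_dim_def using A by simp
  also have "\<dots> = kernel.dim K A" by (rule kdim_cong, rule pow_ker_set[OF A sq])
  finally show ?thesis using o kd by simp
qed



lemma M_entries:
  fixes Wb Jb C :: "real mat"
  assumes Wb: "Wb \<in> carrier_mat K K" and Jb: "Jb \<in> carrier_mat K D" and C: "C \<in> carrier_mat R D"
    and Wbe: "\<And>r t. r < K \<Longrightarrow> t < K \<Longrightarrow> Wb $$ (r,t) = (if r = t then w r else 0)"
    and r: "r < K" and s: "s < K"
  shows "(Wb * Jb * transpose_mat C * C * transpose_mat Jb) $$ (r,s)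
     = w r * (\<Sum>k<R. (C * transpose_mat Jb) $$ (k,r) * (C * transpose_mat Jb) $$ (k,s))"
proof -
  define G where "G = C * transpose_mat Jb"
  have JbT: "transpose_mat Jb \<in> carrier_mat D K" using Jb by simp
  have CT: "transpose_mat C \<in> carrier_mat D R" using C by simp
  have G: "G \<in> carrier_mat R K" unfolding G_def using C JbT by simp
  have tG: "transpose_mat G = Jb * transpose_mat C"
    unfolding G_def transpose_mult[OF C JbT] by simp
  have JC: "Jb * transpose_mat C \<in> carrier_mat K R" using Jb CT by simp
  have "Wb * Jb * transpose_mat C * C * transpose_mat Jb = Wb * (Jb * transpose_mat C) * C * transpose_mat Jb"
    using assoc_mult_mat[OF Wb Jb CT] by simp
  also have "\<dots> = Wb * ((Jb * transpose_mat C) * C) * transpose_mat Jb"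
    using assoc_mult_mat[OF Wb JC C] by simp
  also have "\<dots> = Wb * (((Jb * transpose_mat C) * C) * transpose_mat Jb)"
    using assoc_mult_mat[OF Wb mult_carrier_mat[OF JC C] JbT] by simp
  also have "((Jb * transpose_mat C) * C) * transpose_mat Jb = (Jb * transpose_mat C) * G"
    unfolding G_def using assoc_mult_mat[OF JC C JbT] by simp
  finally have eq: "Wb * Jb * transpose_mat C * C * transpose_mat Jb = Wb * (transpose_mat G * G)"
    unfolding tG .
  define X where "X = transpose_mat G * G"
  have X: "X \<in> carrier_mat K K" unfolding X_def using G by simp
  have Xe: "X $$ (r,s) = (\<Sum>k<R. G $$ (k,r) * G $$ (k,s))"
    unfolding X_def using G r s by (auto simp: scalar_prod_def lessThan_atLeast0 intro!: sum.cong)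
  have "(Wb * X) $$ (r,s) = (\<Sum>t\<in>{0..<K}. Wb $$ (r,t) * X $$ (t,s))"
    using Wb X r s by (auto simp: scalar_prod_def intro!: sum.cong)
  also have "\<dots> = (\<Sum>t\<in>{0..<K}. if r = t then w r * X $$ (r,s) else 0)"
    by (rule sum.cong, auto simp: Wbe r)
  also have "\<dots> = w r * X $$ (r,s)" using r by simp
  finally have "(Wb * X) $$ (r,s) = w r * (\<Sum>k<R. G $$ (k,r) * G $$ (k,s))" unfolding Xe .
  thus ?thesis unfolding eq X_def G_def .
qed



lemma gv_real:
  fixes G :: "real mat" and v :: "complex vec"
  assumes G: "G \<in> carrier_mat R K" and v: "v \<in> carrier_vec K"
  shows "(\<forall>k<R. gv K (\<lambda>k s. G $$ (k,s)) v k = 0) \<longleftrightarrow>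
     (vec K (\<lambda>i. Re (v $ i)) \<in> mat_kernel G \<and> vec K (\<lambda>i. Im (v $ i)) \<in> mat_kernel G)"
proof -
  let ?g = "\<lambda>k s. G $$ (k,s)"
  define a where "a = vec K (\<lambda>i. Re (v $ i))"
  define b where "b = vec K (\<lambda>i. Im (v $ i))"
  have a: "a \<in> carrier_vec K" and b: "b \<in> carrier_vec K" unfolding a_def b_def by auto
  have re: "(G *\<^sub>v a) $ k = Re (gv K ?g v k)" if k: "k < R" for k
    using G k unfolding a_def gv_def by (auto simp: scalar_prod_def Re_sum lessThan_atLeast0 intro!: sum.cong)
  have im: "(G *\<^sub>v b) $ k = Im (gv K ?g v k)" if k: "k < R" for k
    using G k unfolding b_def gv_def by (auto simp: scalar_prod_def Im_sum lessThan_atLeast0 intro!: sum.cong)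
  have ka: "a \<in> mat_kernel G \<longleftrightarrow> (\<forall>k<R. (G *\<^sub>v a) $ k = 0)"
    unfolding mat_kernel[OF G] using a G by (auto simp: vec_eq_iff)
  have kb: "b \<in> mat_kernel G \<longleftrightarrow> (\<forall>k<R. (G *\<^sub>v b) $ k = 0)"
    unfolding mat_kernel[OF G] using b G by (auto simp: vec_eq_iff)
  show ?thesis unfolding a_def[symmetric] b_def[symmetric] ka kb
    using re im by (auto simp: complex_eq_iff)
qed

lemma per_split:
  fixes v :: "complex vec"
  shows "(\<forall>r<K. v $ r = v $ (r mod n)) \<longleftrightarrow>
    ((\<forall>r<K. vec K (\<lambda>i. Re (v $ i)) $ r = vec K (\<lambda>i. Re (v $ i)) $ (r mod n)) \<and>
     (\<forall>r<K. vec K (\<lambda>i. Im (v $ i)) $ r = vec K (\<lambda>i. Im (v $ i)) $ (r mod n)))"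
proof -
  have "r mod n < K" if "r < K" for r using that by (meson le_less_trans mod_less_eq_dividend)
  thus ?thesis by (auto simp: complex_eq_iff)
qed

lemma ker0: "A \<in> carrier_mat 0 0 \<Longrightarrow> mat_kernel A = carrier_vec 0"
  unfolding mat_kernel_def by (auto intro!: eq_vecI)



theorem lemma5:
  fixes m n :: nat and E :: "(nat \<times> nat) list"
    and Cm :: "nat \<times> nat \<Rightarrow> real mat" and W :: "real mat"
  assumes m_pos: "m \<ge> 1"
    and arcs: "\<forall>(j,i) \<in> set E. j < m \<and> i < m \<and> j \<noteq> i"
    and dist: "distinct E"
    and Ccols: "\<forall>e \<in> set E. dim_col (Cm e) = n"
    and Wdim: "W \<in> carrier_mat m m"
    and Wdiag: "diagonal_mat W"
    and Wpos: "\<forall>i < m. W $$ (i,i) > 0"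
    and wellconf:
      "mat_kernel (blockdiag (map Cm E) * transpose_mat (kron (incidence m E) (1\<^sub>m n)))
         = col_space (kron (mat m 1 (\<lambda>_. 1)) (1\<^sub>m n))"
  shows
    "let Jb = kron (incidence m E) (1\<^sub>m n);
         C = blockdiag (map Cm E);
         Wb = kron W (1\<^sub>m n);
         M = map_mat complex_of_real (Wb * Jb * transpose_mat C * C * transpose_mat Jb)
     in order 0 (char_poly M) = n \<and>
        (\<forall>ev. eigenvalue M ev \<longrightarrow> ev = 0 \<or> (Im ev = 0 \<and> Re ev > 0))"
proof -
  define K where "K = m * n"
  define d where "d = length E"
  define Jb where "Jb = kron (incidence m E) (1\<^sub>m n)"
  define C where "C = blockdiag (map Cm E)"
  define Wb where "Wb = kron W (1\<^sub>m n)"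
  define G where "G = C * transpose_mat Jb"
  define M where "M = Wb * Jb * transpose_mat C * C * transpose_mat Jb"
  define Mc where "Mc = map_mat complex_of_real M"
  define R where "R = dim_row C"
  define w where "w r = W $$ (r div n, r div n)" for r
  have "dim_col C = d * n" unfolding C_def d_def
    by (subst bd_dim[of _ n]) (use Ccols in auto)
  hence Cc: "C \<in> carrier_mat R (d * n)" unfolding R_def carrier_mat_def by simp
  have Jbc: "Jb \<in> carrier_mat K (d * n)" unfolding Jb_def K_def d_def carrier_mat_def
    by (simp add: incidence_def)
  have Wbc: "Wb \<in> carrier_mat K K" unfolding Wb_def K_def carrier_mat_def using Wdim by simp
  have Wbe: "Wb $$ (r,t) = (if r = t then w r else 0)" if "r < K" "t < K" for r t
    unfolding Wb_def w_def using kronW[OF Wdim Wdiag, of r n t] that unfolding K_def by simp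
  have JbT: "transpose_mat Jb \<in> carrier_mat (d * n) K" using Jbc by simp
  have Gc: "G \<in> carrier_mat R K" unfolding G_def using Cc JbT by simp
  have CT: "transpose_mat C \<in> carrier_mat (d * n) R" using Cc by simp
  have Mc_c: "M \<in> carrier_mat K K" unfolding M_def
    by (rule mult_carrier_mat[OF mult_carrier_mat[OF mult_carrier_mat[OF mult_carrier_mat[OF Wbc Jbc] CT] Cc] JbT])
  have Mcc: "Mc \<in> carrier_mat K K" unfolding Mc_def using Mc_c by simp
  have wpos: "\<forall>r<K. w r > 0"
  proof (intro allI impI)
    fix r assume "r < K"
    hence "r div n < m" unfolding K_def by (simp add: less_mult_imp_div_less)
    thus "w r > 0" unfolding w_def using Wpos by simp
  qed
  have ent: "\<forall>r<K. \<forall>s<K. Mc $$ (r,s) = of_real (w r * (\<Sum>k<R. G $$ (k,r) * G $$ (k,s)))"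
  proof (intro allI impI)
    fix r s assume r: "r < K" and s: "s < K"
    have "M $$ (r,s) = w r * (\<Sum>k<R. G $$ (k,r) * G $$ (k,s))"
      unfolding M_def G_def by (rule M_entries[OF Wbc Jbc Cc Wbe r s])
    thus "Mc $$ (r,s) = of_real (w r * (\<Sum>k<R. G $$ (k,r) * G $$ (k,s)))"
      unfolding Mc_def using Mc_c r s by simp
  qed
  interpret core K R "\<lambda>k s. G $$ (k,s)" w Mc
    by (unfold_locales, rule Mcc, rule ent, rule wpos)
  have kerG: "mat_kernel G = {y \<in> carrier_vec K. \<forall>r<K. y $ r = y $ (r mod n)}"
    using wellconf colsp[OF m_pos] unfolding G_def C_def Jb_def K_def by simp
  have kerMc: "mat_kernel Mc = {v \<in> carrier_vec K. \<forall>r<K. v $ r = v $ (r mod n)}"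
  proof (rule equalityI; rule subsetI)
    fix v :: "complex vec" assume "v \<in> mat_kernel Mc"
    hence v: "v \<in> carrier_vec K" and z: "Mc *\<^sub>v v = 0\<^sub>v K" using mat_kernelD[OF Mcc] by blast+
    have "\<forall>k<R. gv K (\<lambda>k s. G $$ (k,s)) v k = 0" using ker_iff[OF v] z by blast
    hence "vec K (\<lambda>i. Re (v $ i)) \<in> mat_kernel G \<and> vec K (\<lambda>i. Im (v $ i)) \<in> mat_kernel G"
      using gv_real[OF Gc v] by blast
    hence "\<forall>r<K. v $ r = v $ (r mod n)" unfolding kerG per_split[of K v n] by blast
    with v show "v \<in> {v \<in> carrier_vec K. \<forall>r<K. v $ r = v $ (r mod n)}" by blast
  next
    fix v :: "complex vec" assume "v \<in> {v \<in> carrier_vec K. \<forall>r<K. v $ r = v $ (r mod n)}"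
    hence v: "v \<in> carrier_vec K" and p: "\<forall>r<K. v $ r = v $ (r mod n)" by blast+
    have "vec K (\<lambda>i. Re (v $ i)) \<in> mat_kernel G \<and> vec K (\<lambda>i. Im (v $ i)) \<in> mat_kernel G"
      unfolding kerG using p unfolding per_split[of K v n] by auto
    hence "\<forall>k<R. gv K (\<lambda>k s. G $$ (k,s)) v k = 0" using gv_real[OF Gc v] by blast
    hence "Mc *\<^sub>v v = 0\<^sub>v K" using ker_iff[OF v] by blast
    thus "v \<in> mat_kernel Mc" using v Mcc by (blast intro: mat_kernelI)
  qed
  have kerQ: "mat_kernel (Qm K n) = mat_kernel Mc"
  proof (cases "n = 0")
    case True
    hence K0: "K = 0" unfolding K_def by simp
    have "Qm K n \<in> carrier_mat 0 0" unfolding Qm_def K0 by simp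
    moreover have "Mc \<in> carrier_mat 0 0" using Mcc K0 by simp
    ultimately show ?thesis using ker0 by metis
  next
    case False
    thus ?thesis unfolding kerMc using Qm_ker[of n K m] m_pos K_def by simp
  qed
  have kd: "kernel.dim K Mc = n"
    using Qm_dim[of n K] kdim_cong[OF kerQ, of K] m_pos unfolding K_def by simp
  have sq: "\<forall>v\<in>carrier_vec K. Mc *\<^sub>v (Mc *\<^sub>v v) = 0\<^sub>v K \<longrightarrow> Mc *\<^sub>v v = 0\<^sub>v K"
    using sq_ker by blast
  have ord: "order 0 (char_poly Mc) = n" by (rule order_from_kernel[OF Mcc sq kd])
  have eigs: "\<forall>ev. eigenvalue Mc ev \<longrightarrow> ev = 0 \<or> (Im ev = 0 \<and> Re ev > 0)"
    using eig by blast
  show ?thesis unfolding Let_def using ord eigs unfolding Mc_def M_def Wb_def Jb_def C_def by blast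
qed


end
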